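(* If $\mathcal{F}=\{f_i\}_{i=1}^N$ is an exact phase-retrievable frame for $\mathbb{R}^n$, then $2n-1\le N\le n(n+1)/2$.
   Context: A frame for $\mathbb{R}^n$ is a finite spanning sequence. It is phase-retrievable if $|\langle x,f_i\rangle|=|\langle y,f_i\rangle|$ for all $i$ implies $x=\pm y$. Let $\mathcal{S}_2$ be the set of real symmetric $n\times n$ matrices of rank at most $2$; for $\Lambda\subseteq\{1,\dots,N\}$ put $\Theta_{L(\mathcal{F}_\Lambda)}(A)=(f_i^TAf_i)_{i\in\Lambda}$. $\mathcal{F}$ has the exact PR-redundancy property if $\ker(\Theta_{L(\mathcal{F}_\Lambda)})\cap\mathcal{S}_2\neq\ker(\Theta_{L(\mathcal{F})})\cap\mathcal{S}_2$ for every proper subset $\Lambda$. An exact phase-retrievable frame is a phase-retrievable frame with the exact PR-redundancy property. *)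

theory Defs
  imports "HOL-Analysis.Analysis"
begin

text \<open>A frame for R^n is a finite spanning sequence, represented as a list of vectors
  in real^'n (dimension n = CARD('n)); the frame vector f_i is fs ! i, i < length fs.\<close>

definition is_frame :: "(real^'n) list \<Rightarrow> bool" where
  "is_frame fs \<longleftrightarrow> span (set fs) = UNIV"

definition phase_retrievable :: "(real^'n) list \<Rightarrow> bool" where
  "phase_retrievable fs \<longleftrightarrow> is_frame fs \<and>
     (\<forall>x y. (\<forall>i<length fs. \<bar>x \<bullet> fs ! i\<bar> = \<bar>y \<bullet> fs ! i\<bar>) \<longrightarrow> x = y \<or> x = - y)"

definition S2 :: "(real^'n^'n) set" where
  "S2 = {A. transpose A = A \<and> rank A \<le> 2}"

definition ker_Theta :: "(real^'n) list \<Rightarrow> nat set \<Rightarrow> (real^'n^'n) set" where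
  "ker_Theta fs \<Lambda> = {A. transpose A = A \<and> (\<forall>i\<in>\<Lambda>. fs ! i \<bullet> (A *v fs ! i) = 0)}"

definition exact_PR_redundancy :: "(real^'n) list \<Rightarrow> bool" where
  "exact_PR_redundancy fs \<longleftrightarrow>
     (\<forall>\<Lambda>. \<Lambda> \<subset> {..<length fs} \<longrightarrow>
        ker_Theta fs \<Lambda> \<inter> S2 \<noteq> ker_Theta fs {..<length fs} \<inter> S2)"

definition exact_phase_retrievable :: "(real^'n) list \<Rightarrow> bool" where
  "exact_phase_retrievable fs \<longleftrightarrow> phase_retrievable fs \<and> exact_PR_redundancy fs"

end

theory Submission imports Defs begin

lemma t0: "(c::real) * ((if P then 1 else 0) + (if Q then 1 else 0)) = (if P then c else 0) + (if Q then c else 0)"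
  by simp


definition outer :: "real^'n \<Rightarrow> real^'n^'n" where
  "outer f = (\<chi> a b. f$a * f$b)"

definition Tm :: "'n \<Rightarrow> 'n \<Rightarrow> real^'n^'n" where
  "Tm k l = (\<chi> a b. (if a = k \<and> b = l then 1 else 0) + (if a = l \<and> b = k then 1 else 0))"

definition hm :: "'n set \<Rightarrow> real^'n^'n" where
  "hm s = (\<chi> a b. if {a,b} = s then (if card s = 1 then 2 else 1) else 0)"

lemma my_vec_eqI: "(\<And>i. x$i = y$i) \<Longrightarrow> x = y"
  by (simp add: vec_eq_iff)

lemma quad_outer: "f \<bullet> (A *v f) = A \<bullet> outer f"
  unfolding outer_def inner_vec_def matrix_vector_mult_def
  by (auto simp: sum_distrib_left intro!: sum.cong)

lemma outer_sym: "transpose (outer f) = outer f"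
  by (simp add: outer_def transpose_def vec_eq_iff mult.commute)

lemma Tm_hm: "Tm k l = hm {k,l}"
proof -
  have "(Tm k l)$a$b = (hm {k,l})$a$b" for a b
  proof (cases "k = l")
    case True
    thus ?thesis unfolding Tm_def hm_def by auto
  next
    case False
    hence c: "card {k,l} = 2" by simp
    have "({a,b} = {k,l}) = ((a = k \<and> b = l) \<or> (a = l \<and> b = k))" by (rule doubleton_eq_iff)
    thus ?thesis unfolding Tm_def hm_def using False c by auto
  qed
  thus ?thesis by (simp add: vec_eq_iff)
qed

lemma sym_span: "transpose M = M \<Longrightarrow> M \<in> span (range (\<lambda>(k,l). Tm k l))"
proof -
  assume sM: "transpose M = M"
  have eq: "M = (\<Sum>k\<in>UNIV. \<Sum>l\<in>UNIV. (M$k$l / 2) *\<^sub>R Tm k l)"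
  proof -
    show ?thesis
    proof (intro my_vec_eqI)
      fix a b
      have Mab: "M$b$a = M$a$b" using sM by (metis transpose_def vec_lambda_beta)
      have "(\<Sum>k\<in>UNIV. \<Sum>l\<in>UNIV. (M$k$l / 2) *\<^sub>R Tm k l)$a$b
          = (\<Sum>k\<in>UNIV. \<Sum>l\<in>UNIV. (M$k$l / 2) * ((if a = k \<and> b = l then 1 else 0) + (if a = l \<and> b = k then 1 else 0)))"
        by (simp add: Tm_def)
      also have "\<dots> = (\<Sum>k\<in>UNIV. \<Sum>l\<in>UNIV. (if a = k \<and> b = l then M$k$l / 2 else 0))
          + (\<Sum>k\<in>UNIV. \<Sum>l\<in>UNIV. (if a = l \<and> b = k then M$k$l / 2 else 0))"
      proof -
        have t: "(M$k$l / 2) * ((if a = k \<and> b = l then 1 else 0) + (if a = l \<and> b = k then 1 else 0))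
           = (if a = k \<and> b = l then M$k$l / 2 else 0) + (if a = l \<and> b = k then M$k$l / 2 else 0)" for k l
          by (rule t0)
        show ?thesis by (simp only: t sum.distrib)
      qed
      also have "\<dots> = M$a$b/2 + M$b$a/2"
      proof -
        have 1: "(\<Sum>l\<in>UNIV. (if a = k \<and> b = l then M$k$l / 2 else 0)) = (if a = k then M$k$b/2 else 0)" for k
          by (cases "a = k") (simp_all add: sum.delta)
        have 2: "(\<Sum>l\<in>UNIV. (if a = l \<and> b = k then M$k$l / 2 else 0)) = (if b = k then M$k$a/2 else 0)" for k
          by (cases "b = k") (simp_all add: sum.delta')
        show ?thesis by (simp add: 1 2 sum.delta)
      qed
      finally show "M$a$b = (\<Sum>k\<in>UNIV. \<Sum>l\<in>UNIV. (M$k$l / 2) *\<^sub>R Tm k l)$a$b" using Mab by simp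
    qed
  qed
  show ?thesis
    by (subst eq, intro span_sum span_mul span_base) (auto simp: image_iff)
qed

lemma card_pairs: "card {{k,l} | k l :: 'n::finite. True} = CARD('n) * (CARD('n) + 1) div 2"
proof -
  have e: "{{k,l} | k l :: 'n. True} = {s. s \<subseteq> UNIV \<and> card s = 1} \<union> {s. s \<subseteq> UNIV \<and> card s = 2}"
    by (auto simp: card_1_singleton_iff card_2_iff)
  have "card ({s. s \<subseteq> (UNIV::'n set) \<and> card s = 1} \<union> {s. s \<subseteq> UNIV \<and> card s = 2})
     = card {s. s \<subseteq> (UNIV::'n set) \<and> card s = 1} + card {s. s \<subseteq> (UNIV::'n set) \<and> card s = 2}"
    by (rule card_Un_disjoint) (rule finite, rule finite, auto)
  also have "\<dots> = (CARD('n) choose 1) + (CARD('n) choose 2)" using n_subsets[of "UNIV::'n set" 1] n_subsets[of "UNIV::'n set" 2] by simp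
  also have "\<dots> = CARD('n) * (CARD('n) + 1) div 2"
    by (simp add: choose_two) (cases "CARD('n)"; simp; simp add: algebra_simps)
  finally show ?thesis using e by simp
qed

lemma lower:
  fixes fs :: "(real^'n) list"
  assumes pr: "phase_retrievable fs"
  shows "2 * CARD('n) - 1 \<le> length fs"
proof (rule ccontr)
  assume "\<not> ?thesis"
  hence NL: "length fs \<le> 2 * (CARD('n) - 1)" by simp
  define N where "N = length fs"
  define m where "m = CARD('n) - 1"
  have mlt: "m < CARD('n)" unfolding m_def by simp
  define S where "S = {..<min m N}"
  define T where "T = {..<N} - S"
  have cS: "card S \<le> m" unfolding S_def by simp
  have cT: "card T \<le> m" unfolding T_def S_def using NL unfolding N_def m_def
    by (simp add: card_Diff_subset)
  have d1: "dim ((\<lambda>i. fs ! i) ` S) < DIM(real^'n)"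
  proof -
    have "dim ((\<lambda>i. fs ! i) ` S) \<le> card ((\<lambda>i. fs ! i) ` S)"
      by (rule dim_le_card) (auto simp: span_base S_def)
    also have "\<dots> \<le> card S" by (rule card_image_le) (simp add: S_def)
    finally show ?thesis using cS mlt by simp
  qed
  have d2: "dim ((\<lambda>i. fs ! i) ` T) < DIM(real^'n)"
  proof -
    have "dim ((\<lambda>i. fs ! i) ` T) \<le> card ((\<lambda>i. fs ! i) ` T)"
      by (rule dim_le_card) (auto simp: span_base T_def)
    also have "\<dots> \<le> card T" by (rule card_image_le) (simp add: T_def)
    finally show ?thesis using cT mlt by simp
  qed
  obtain u where u0: "u \<noteq> 0" and u: "\<And>y. y \<in> span ((\<lambda>i. fs ! i) ` S) \<Longrightarrow> orthogonal u y"
    using orthogonal_to_subspace_exists[OF d1] by blast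
  obtain v where v0: "v \<noteq> 0" and v: "\<And>y. y \<in> span ((\<lambda>i. fs ! i) ` T) \<Longrightarrow> orthogonal v y"
    using orthogonal_to_subspace_exists[OF d2] by blast
  have "\<forall>i<length fs. \<bar>(u + v) \<bullet> fs ! i\<bar> = \<bar>(u - v) \<bullet> fs ! i\<bar>"
  proof (intro allI impI)
    fix i assume i: "i < length fs"
    show "\<bar>(u + v) \<bullet> fs ! i\<bar> = \<bar>(u - v) \<bullet> fs ! i\<bar>"
    proof (cases "i \<in> S")
      case True
      hence "u \<bullet> fs ! i = 0" using u[of "fs ! i"] by (auto simp: span_base orthogonal_def)
      thus ?thesis by (simp add: inner_add_left inner_diff_left)
    next
      case False
      hence "i \<in> T" using i by (simp add: T_def N_def)
      hence "v \<bullet> fs ! i = 0" using v[of "fs ! i"] by (auto simp: span_base orthogonal_def)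
      thus ?thesis by (simp add: inner_add_left inner_diff_left)
    qed
  qed
  hence "u + v = u - v \<or> u + v = - (u - v)" using pr unfolding phase_retrievable_def by blast
  moreover have "u + v \<noteq> u - v"
  proof
    assume "u + v = u - v" hence "v + v = 0" by (simp add: algebra_simps)
    hence "2 *\<^sub>R v = 0" by (simp add: scaleR_2)
    thus False using v0 by simp
  qed
  moreover have "u + v \<noteq> - (u - v)"
  proof
    assume "u + v = - (u - v)" hence "u + u = 0" by (simp add: algebra_simps)
    hence "2 *\<^sub>R u = 0" by (simp add: scaleR_2)
    thus False using u0 by simp
  qed
  ultimately show False by blast
qed


lemma dim_sym: "dim {M::real^'n^'n. transpose M = M} \<le> CARD('n) * (CARD('n) + 1) div 2"
proof -
  define P where "P = {{k,l} | k l :: 'n. True}"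
  have fin: "finite P" by simp
  have sub: "range (\<lambda>(k::'n,l::'n). Tm k l) \<subseteq> hm ` P"
    by (auto simp: P_def Tm_hm)
  have s1: "{M::real^'n^'n. transpose M = M} \<subseteq> span (range (\<lambda>(k::'n,l::'n). Tm k l))"
    using sym_span by blast
  have f1: "finite (range (\<lambda>(k::'n,l::'n). Tm k l))" by simp
  have "dim {M::real^'n^'n. transpose M = M} \<le> card (range (\<lambda>(k::'n,l::'n). Tm k l))"
    using dim_le_card[OF s1 f1] .
  also have "\<dots> \<le> card (hm ` P)" by (rule card_mono) (use fin sub in auto)
  also have "\<dots> \<le> card P" by (rule card_image_le[OF fin])
  also have "\<dots> = CARD('n) * (CARD('n) + 1) div 2" unfolding P_def by (rule card_pairs)
  finally show ?thesis .
qed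

lemma upper:
  fixes fs :: "(real^'n) list"
  assumes ex: "exact_PR_redundancy fs"
  shows "length fs \<le> CARD('n) * (CARD('n) + 1) div 2"
proof (rule ccontr)
  assume "\<not> ?thesis"
  hence big: "CARD('n) * (CARD('n) + 1) div 2 < length fs" by simp
  define N where "N = length fs"
  define g where "g i = outer (fs ! i)" for i
  have "\<exists>j<N. g j \<in> span (g ` ({..<N} - {j}))"
  proof (cases "\<exists>i<N. \<exists>j<N. i \<noteq> j \<and> g i = g j")
    case True
    then obtain i j where "i < N" "j < N" "i \<noteq> j" "g i = g j" by blast
    hence "g j \<in> g ` ({..<N} - {j})" by (intro image_eqI[of _ _ i]) auto
    hence "g j \<in> span (g ` ({..<N} - {j}))" by (rule span_base)
    with \<open>j < N\<close> show ?thesis by blast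
  next
    case False
    hence inj: "inj_on g {..<N}" unfolding inj_on_def by auto
    define G where "G = g ` {..<N}"
    have cG: "card G = N" unfolding G_def using inj by (simp add: card_image)
    have GS: "G \<subseteq> {M. transpose M = M}" unfolding G_def g_def by (auto simp: outer_sym)
    have "\<not> independent G"
    proof
      assume "independent G"
      hence "card G \<le> dim {M::real^'n^'n. transpose M = M}" using independent_card_le_dim[OF GS] by blast
      with dim_sym[where 'n='n] cG big show False unfolding N_def by linarith
    qed
    then obtain a where a: "a \<in> G" "a \<in> span (G - {a})" unfolding dependent_def by blast
    then obtain j where j: "j < N" "a = g j" unfolding G_def by auto
    have "G - {a} = g ` ({..<N} - {j})"
      unfolding G_def j(2) using inj_on_image_set_diff[OF inj, of "{..<N}" "{j}"] j(1) by auto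
    with a j show ?thesis by auto
  qed
  then obtain j where j: "j < N" and gj: "g j \<in> span (g ` ({..<N} - {j}))" by blast
  define L where "L = {..<N} - {j}"
  have Lsub: "L \<subset> {..<length fs}" unfolding L_def N_def using j N_def by auto
  have "ker_Theta fs L = ker_Theta fs {..<length fs}"
  proof
    show "ker_Theta fs {..<length fs} \<subseteq> ker_Theta fs L"
      using Lsub unfolding ker_Theta_def by auto
  next
    show "ker_Theta fs L \<subseteq> ker_Theta fs {..<length fs}"
    proof
      fix A assume A: "A \<in> ker_Theta fs L"
      have "g ` L \<subseteq> {x. A \<bullet> x = 0}"
        using A unfolding ker_Theta_def g_def by (auto simp: quad_outer)
      hence "span (g ` L) \<subseteq> {x. A \<bullet> x = 0}" by (rule span_minimal[OF _ subspace_hyperplane])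
      hence "A \<bullet> g j = 0" using gj unfolding L_def by blast
      hence "fs ! j \<bullet> (A *v fs ! j) = 0" by (simp add: quad_outer g_def)
      moreover have "\<forall>i\<in>L. fs ! i \<bullet> (A *v fs ! i) = 0" "transpose A = A"
        using A unfolding ker_Theta_def by auto
      ultimately show "A \<in> ker_Theta fs {..<length fs}"
        unfolding ker_Theta_def L_def N_def by auto
    qed
  qed
  thus False using ex Lsub unfolding exact_PR_redundancy_def by auto
qed

theorem corollary1p6:
  fixes fs :: "(real^'n) list"
  assumes "exact_phase_retrievable fs"
  shows "2 * CARD('n) - 1 \<le> length fs \<and> length fs \<le> CARD('n) * (CARD('n) + 1) div 2"
  using assms lower upper unfolding exact_phase_retrievable_def by blast

end
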